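(* Let $\zeta\in(0,\infty)$ and $(h,w)\in\boldsymbol\Sigma([0,\zeta])$. Then the snake metric $d_{h,w}$ is a continuous pseudo-metric on $[0,\zeta]$ satisfying the four points inequality: for all $s_1,s_2,s_3,s_4\in[0,\zeta]$, $$d_{h,w}(s_1,s_2)+d_{h,w}(s_3,s_4)\le\max\big(d_{h,w}(s_1,s_3)+d_{h,w}(s_2,s_4),\,d_{h,w}(s_1,s_4)+d_{h,w}(s_2,s_3)\big).$$
   Context: $\mathbf C_0$: continuous functions $[0,\infty)\to\mathbb R$ with the topology of uniform convergence on compacts. A snake $(h,w)\in\boldsymbol\Sigma([0,\zeta])$: $h:[0,\zeta]\to[0,\infty)$ continuous, $h(0)=h(\zeta)=0$, $s\mapsto w_s\in\mathbf C_0$ continuous, $w_s(r)=w_s(h(s))=:\widehat w_s$ for $r\ge h(s)$, and $w_{s_1}(r)=w_{s_2}(r)$ for $r\in[0,m_h(s_1,s_2)]$ where $m_h(s_1,s_2)=\min_{[s_1\wedge s_2,s_1\vee s_2]}h$. Snake metric: $M_{h,w}(s_1,s_2)=\min\big(\min_{r\in[m_h(s_1,s_2),h(s_1)]}w_{s_1}(r),\min_{r\in[m_h(s_1,s_2),h(s_2)]}w_{s_2}(r)\big)$, $d_{h,w}(s_1,s_2)=\widehat w_{s_1}+\widehat w_{s_2}-2M_{h,w}(s_1,s_2)$. *)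

theory Defs
  imports "HOL-Analysis.Analysis"
begin

text \<open>A path-valued function \<open>w :: real \<Rightarrow> real \<Rightarrow> real\<close> encodes \<open>s \<mapsto> w_s\<close>;
  only the values \<open>w s r\<close> for \<open>r \<ge> 0\<close> are relevant (elements of C_0 are functions on [0,oo)).\<close>

definition m_h :: "(real \<Rightarrow> real) \<Rightarrow> real \<Rightarrow> real \<Rightarrow> real" where
  "m_h h s1 s2 = Inf (h ` {min s1 s2 .. max s1 s2})"

definition is_snake :: "real \<Rightarrow> (real \<Rightarrow> real) \<Rightarrow> (real \<Rightarrow> real \<Rightarrow> real) \<Rightarrow> bool" where
  "is_snake \<zeta> h w \<longleftrightarrow>
     continuous_on {0..\<zeta>} h \<and> (\<forall>s\<in>{0..\<zeta>}. h s \<ge> 0) \<and> h 0 = 0 \<and> h \<zeta> = 0 \<and>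
     (\<forall>s\<in>{0..\<zeta>}. continuous_on {0..} (w s)) \<and>
     (\<forall>s\<in>{0..\<zeta>}. \<forall>R\<ge>0. \<forall>\<epsilon>>0. \<exists>\<delta>>0. \<forall>s'\<in>{0..\<zeta>}. \<bar>s' - s\<bar> < \<delta> \<longrightarrow>
          (\<forall>r\<in>{0..R}. \<bar>w s' r - w s r\<bar> < \<epsilon>)) \<and>
     (\<forall>s\<in>{0..\<zeta>}. \<forall>r. r \<ge> h s \<longrightarrow> w s r = w s (h s)) \<and>
     (\<forall>s1\<in>{0..\<zeta>}. \<forall>s2\<in>{0..\<zeta>}. \<forall>r\<in>{0..m_h h s1 s2}. w s1 r = w s2 r)"

definition tip :: "(real \<Rightarrow> real) \<Rightarrow> (real \<Rightarrow> real \<Rightarrow> real) \<Rightarrow> real \<Rightarrow> real" where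
  "tip h w s = w s (h s)"

definition M_hw :: "(real \<Rightarrow> real) \<Rightarrow> (real \<Rightarrow> real \<Rightarrow> real) \<Rightarrow> real \<Rightarrow> real \<Rightarrow> real" where
  "M_hw h w s1 s2 = min (Inf (w s1 ` {m_h h s1 s2 .. h s1})) (Inf (w s2 ` {m_h h s1 s2 .. h s2}))"

definition d_hw :: "(real \<Rightarrow> real) \<Rightarrow> (real \<Rightarrow> real \<Rightarrow> real) \<Rightarrow> real \<Rightarrow> real \<Rightarrow> real" where
  "d_hw h w s1 s2 = tip h w s1 + tip h w s2 - 2 * M_hw h w s1 s2"

end

theory Submission
  imports Defs
begin

lemma fp_alg:
  fixes M :: "'a \<Rightarrow> 'a \<Rightarrow> real"
  assumes sym: "\<And>x y. x\<in>S \<Longrightarrow> y\<in>S \<Longrightarrow> M x y = M y x"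
    and ultra: "\<And>x y z. x\<in>S \<Longrightarrow> y\<in>S \<Longrightarrow> z\<in>S \<Longrightarrow> min (M x y) (M y z) \<le> M x z"
    and S: "a\<in>S" "b\<in>S" "c\<in>S" "d\<in>S"
  shows "min (M a c + M b d) (M a d + M b c) \<le> M a b + M c d"
proof -
  have s: "M b a = M a b" "M c a = M a c" "M d a = M a d" "M c b = M b c" "M d b = M b d" "M d c = M c d"
    using sym S by auto
  have "min (M a c) (M b c) \<le> M a b" using ultra[of a c b] S s by simp
  moreover have "min (M a d) (M b d) \<le> M a b" using ultra[of a d b] S s by simp
  moreover have "min (M a b) (M b c) \<le> M a c" using ultra[of a b c] S s by simp
  moreover have "min (M a d) (M c d) \<le> M a c" using ultra[of a d c] S s by simp
  moreover have "min (M a b) (M b d) \<le> M a d" using ultra[of a b d] S s by simp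
  moreover have "min (M a c) (M c d) \<le> M a d" using ultra[of a c d] S s by simp
  moreover have "min (M a b) (M a c) \<le> M b c" using ultra[of b a c] S s by simp
  moreover have "min (M b d) (M c d) \<le> M b c" using ultra[of b d c] S s by simp
  moreover have "min (M a b) (M a d) \<le> M b d" using ultra[of b a d] S s by simp
  moreover have "min (M b c) (M c d) \<le> M b d" using ultra[of b c d] S s by simp
  moreover have "min (M a c) (M a d) \<le> M c d" using ultra[of c a d] S s by simp
  moreover have "min (M b c) (M b d) \<le> M c d" using ultra[of c b d] S s by simp
  ultimately show ?thesis by (smt (verit))
qed

lemma snakeD:
  assumes "is_snake \<zeta> h w"
  shows "continuous_on {0..\<zeta>} h" "\<And>s. s\<in>{0..\<zeta>} \<Longrightarrow> h s \<ge> 0"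
    "\<And>s. s\<in>{0..\<zeta>} \<Longrightarrow> continuous_on {0..} (w s)"
    "\<And>s R \<epsilon>. s\<in>{0..\<zeta>} \<Longrightarrow> R \<ge> 0 \<Longrightarrow> \<epsilon>>0 \<Longrightarrow> \<exists>\<delta>>0. \<forall>s'\<in>{0..\<zeta>}. \<bar>s' - s\<bar> < \<delta> \<longrightarrow> (\<forall>r\<in>{0..R}. \<bar>w s' r - w s r\<bar> < \<epsilon>)"
    "\<And>s1 s2 r. s1\<in>{0..\<zeta>} \<Longrightarrow> s2\<in>{0..\<zeta>} \<Longrightarrow> r\<in>{0..m_h h s1 s2} \<Longrightarrow> w s1 r = w s2 r"
  using assms unfolding is_snake_def by blast+

lemma mh_lower:
  assumes "is_snake \<zeta> h w" "a\<in>{0..\<zeta>}" "b\<in>{0..\<zeta>}" "x \<in> {min a b..max a b}"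
  shows "m_h h a b \<le> h x"
proof -
  have sub: "{min a b..max a b} \<subseteq> {0..\<zeta>}" using assms(2,3) by auto
  have "bdd_below (h ` {min a b..max a b})"
    using snakeD(2)[OF assms(1)] sub by (intro bdd_belowI[where m=0]) blast
  thus ?thesis unfolding m_h_def using assms(4) by (auto intro: cInf_lower)
qed

lemma mh_greatest:
  assumes "\<And>x. x\<in>{min a b..max a b} \<Longrightarrow> c \<le> h x"
  shows "c \<le> m_h h a b"
  unfolding m_h_def using assms by (intro cInf_greatest) auto

lemma mh_nonneg:
  assumes "is_snake \<zeta> h w" "a\<in>{0..\<zeta>}" "b\<in>{0..\<zeta>}"
  shows "0 \<le> m_h h a b"
  using assms by (intro mh_greatest snakeD(2)[OF assms(1)]) auto

lemma mh_le:
  assumes "is_snake \<zeta> h w" "a\<in>{0..\<zeta>}" "b\<in>{0..\<zeta>}"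
  shows "m_h h a b \<le> h a" "m_h h a b \<le> h b"
  using assms by (auto intro!: mh_lower)

lemma mh_sym: "m_h h a b = m_h h b a"
  unfolding m_h_def by (simp add: min.commute max.commute)

lemma mh_diag: "m_h h s s = h s"
  unfolding m_h_def by simp

lemma mh_ultra:
  assumes "is_snake \<zeta> h w" "a\<in>{0..\<zeta>}" "b\<in>{0..\<zeta>}" "c\<in>{0..\<zeta>}"
  shows "min (m_h h a b) (m_h h b c) \<le> m_h h a c"
proof (rule mh_greatest)
  fix x assume x: "x \<in> {min a c..max a c}"
  then have "x \<in> {min a b..max a b} \<or> x \<in> {min b c..max b c}" by auto
  then show "min (m_h h a b) (m_h h b c) \<le> h x"
    using mh_lower[OF assms(1,2,3)] mh_lower[OF assms(1,3,4)] by (meson min.coboundedI1 min.coboundedI2)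
qed

lemma winf_lower:
  assumes "is_snake \<zeta> h w" "s\<in>{0..\<zeta>}" "0 \<le> x" "r\<in>{x..y}"
  shows "Inf (w s ` {x..y}) \<le> w s r"
proof -
  have "continuous_on {x..y} (w s)"
    by (rule continuous_on_subset[OF snakeD(3)[OF assms(1,2)]]) (use assms(3) in auto)
  then have "compact (w s ` {x..y})" by (rule compact_continuous_image[OF _ compact_Icc])
  then have "bdd_below (w s ` {x..y})" by (intro bounded_imp_bdd_below compact_imp_bounded)
  then show ?thesis using assms(4) by (auto intro: cInf_lower)
qed

lemma winf_greatest:
  fixes w :: "real \<Rightarrow> real \<Rightarrow> real"
  assumes "x \<le> y" "\<And>r. r\<in>{x..y} \<Longrightarrow> c \<le> w s r"
  shows "c \<le> Inf (w s ` {x..y})"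
  by (rule cInf_greatest) (use assms in auto)

lemma M_le_tip:
  assumes "is_snake \<zeta> h w" "a\<in>{0..\<zeta>}" "b\<in>{0..\<zeta>}"
  shows "M_hw h w a b \<le> tip h w a" "M_hw h w a b \<le> tip h w b"
proof -
  have "Inf (w a ` {m_h h a b..h a}) \<le> w a (h a)"
    using assms mh_nonneg mh_le by (intro winf_lower) auto
  then show "M_hw h w a b \<le> tip h w a" unfolding M_hw_def tip_def by linarith
  have "Inf (w b ` {m_h h a b..h b}) \<le> w b (h b)"
    using assms mh_nonneg mh_le by (intro winf_lower) auto
  then show "M_hw h w a b \<le> tip h w b" unfolding M_hw_def tip_def by linarith
qed

lemma M_diag: "M_hw h w s s = tip h w s"
  unfolding M_hw_def tip_def mh_diag by simp

lemma M_sym: "M_hw h w a b = M_hw h w b a"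
  unfolding M_hw_def by (simp add: mh_sym min.commute)

lemma M_side:
  assumes sn: "is_snake \<zeta> h w" and a: "a\<in>{0..\<zeta>}" and b: "b\<in>{0..\<zeta>}" and c: "c\<in>{0..\<zeta>}"
    and r: "r \<in> {m_h h a c..h a}"
  shows "min (M_hw h w a b) (M_hw h w b c) \<le> w a r"
proof (cases "r \<ge> m_h h a b")
  case True
  have "Inf (w a ` {m_h h a b..h a}) \<le> w a r"
    using True r sn a b mh_nonneg by (intro winf_lower) auto
  then show ?thesis unfolding M_hw_def by linarith
next
  case False
  have u: "min (m_h h a b) (m_h h b c) \<le> m_h h a c" by (rule mh_ultra[OF sn a b c])
  have "0 \<le> m_h h a c" using mh_nonneg[OF sn a c] .
  then have eq: "w a r = w b r" using False r by (intro snakeD(5)[OF sn a b]) auto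
  have "m_h h b c \<le> r" using u False r unfolding min_le_iff_disj by auto
  moreover have "r \<le> h b" using False mh_le[OF sn a b] by linarith
  ultimately have "Inf (w b ` {m_h h b c..h b}) \<le> w b r"
    using sn b c mh_nonneg by (intro winf_lower) auto
  then show ?thesis unfolding M_hw_def eq by linarith
qed

lemma M_ultra:
  assumes sn: "is_snake \<zeta> h w" and a: "a\<in>{0..\<zeta>}" and b: "b\<in>{0..\<zeta>}" and c: "c\<in>{0..\<zeta>}"
  shows "min (M_hw h w a b) (M_hw h w b c) \<le> M_hw h w a c"
proof -
  have 1: "min (M_hw h w a b) (M_hw h w b c) \<le> Inf (w a ` {m_h h a c..h a})"
    using mh_le[OF sn a c] M_side[OF sn a b c] by (intro winf_greatest) auto
  have "min (M_hw h w c b) (M_hw h w b a) \<le> Inf (w c ` {m_h h c a..h c})"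
    using mh_le[OF sn c a] M_side[OF sn c b a] by (intro winf_greatest) auto
  then have 2: "min (M_hw h w a b) (M_hw h w b c) \<le> Inf (w c ` {m_h h a c..h c})"
    by (simp add: M_sym mh_sym min.commute)
  show ?thesis using 1 2 unfolding M_hw_def[of h w a c] by linarith
qed

lemma cont_est:
  assumes sn: "is_snake \<zeta> h w" and s: "s \<in> {0..\<zeta>}" and e: "\<epsilon> > 0"
  shows "\<exists>\<delta>>0. \<forall>s'\<in>{0..\<zeta>}. \<bar>s' - s\<bar> < \<delta> \<longrightarrow>
     (\<forall>r\<in>{m_h h s s'..h s'}. \<bar>w s' r - w s (h s)\<bar> < \<epsilon>) \<and>
     (\<forall>r\<in>{m_h h s s'..h s}. \<bar>w s r - w s (h s)\<bar> < \<epsilon>)"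
proof -
  have hc: "continuous_on {0..\<zeta>} h" by (rule snakeD(1)[OF sn])
  have "compact (h ` {0..\<zeta>})" by (rule compact_continuous_image[OF hc compact_Icc])
  then obtain B where B: "\<forall>x\<in>h ` {0..\<zeta>}. \<bar>x\<bar> \<le> B"
    using compact_imp_bounded bounded_real by metis
  have hs0: "0 \<le> h s" using snakeD(2)[OF sn s] .
  have B0: "0 \<le> B" using B s by force
  have "\<forall>x\<in>{0..}. \<forall>e>0. \<exists>d>0. \<forall>x'\<in>{0..}. dist x' x < d \<longrightarrow> dist (w s x') (w s x) < e"
    using snakeD(3)[OF sn s] unfolding continuous_on_iff .
  from this[rule_format, of "h s" "\<epsilon>/2"]
  have "\<exists>\<eta>>0. \<forall>r\<in>{0..}. dist r (h s) < \<eta> \<longrightarrow> dist (w s r) (w s (h s)) < \<epsilon>/2"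
    using hs0 e by auto
  then obtain \<eta> where eta: "\<eta> > 0" "\<And>r. r \<ge> 0 \<Longrightarrow> \<bar>r - h s\<bar> < \<eta> \<Longrightarrow> \<bar>w s r - w s (h s)\<bar> < \<epsilon>/2"
    by (auto simp: dist_real_def)
  obtain \<delta>1 where d1: "\<delta>1 > 0" "\<forall>s'\<in>{0..\<zeta>}. \<bar>s' - s\<bar> < \<delta>1 \<longrightarrow> (\<forall>r\<in>{0..B}. \<bar>w s' r - w s r\<bar> < \<epsilon>/2)"
    using snakeD(4)[OF sn s B0, of "\<epsilon>/2"] e by auto
  have "\<forall>x\<in>{0..\<zeta>}. \<forall>e>0. \<exists>d>0. \<forall>x'\<in>{0..\<zeta>}. dist x' x < d \<longrightarrow> dist (h x') (h x) < e"
    using hc unfolding continuous_on_iff .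
  from this[rule_format, of s "\<eta>/2"]
  have "\<exists>d>0. \<forall>x'\<in>{0..\<zeta>}. dist x' s < d \<longrightarrow> dist (h x') (h s) < \<eta>/2"
    using s eta(1) by auto
  then obtain \<delta>2 where d2: "\<delta>2 > 0" "\<And>x'. x'\<in>{0..\<zeta>} \<Longrightarrow> \<bar>x' - s\<bar> < \<delta>2 \<Longrightarrow> \<bar>h x' - h s\<bar> < \<eta>/2"
    by (auto simp: dist_real_def)
  show ?thesis
  proof (rule exI[of _ "min \<delta>1 \<delta>2"], rule conjI)
    show "0 < min \<delta>1 \<delta>2" using d1 d2 by simp
    show "\<forall>s'\<in>{0..\<zeta>}. \<bar>s' - s\<bar> < min \<delta>1 \<delta>2 \<longrightarrow>
     (\<forall>r\<in>{m_h h s s'..h s'}. \<bar>w s' r - w s (h s)\<bar> < \<epsilon>) \<and>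
     (\<forall>r\<in>{m_h h s s'..h s}. \<bar>w s r - w s (h s)\<bar> < \<epsilon>)"
    proof (intro ballI impI)
    fix s' assume s': "s' \<in> {0..\<zeta>}" and ds: "\<bar>s' - s\<bar> < min \<delta>1 \<delta>2"
    have "h s - \<eta>/2 \<le> m_h h s s'"
    proof (rule mh_greatest)
      fix x assume x: "x \<in> {min s s'..max s s'}"
      then have "x \<in> {0..\<zeta>}" "\<bar>x - s\<bar> < \<delta>2" using s s' ds by auto
      then have "\<bar>h x - h s\<bar> < \<eta>/2" using d2(2) by blast
      then show "h s - \<eta>/2 \<le> h x" by linarith
    qed
    moreover have hs': "\<bar>h s' - h s\<bar> < \<eta>/2" using d2(2) s' ds by auto
    moreover have m0: "0 \<le> m_h h s s'" by (rule mh_nonneg[OF sn s s'])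
    ultimately have near: "\<And>r. r \<in> {m_h h s s'..max (h s) (h s')} \<Longrightarrow> r \<ge> 0 \<and> \<bar>r - h s\<bar> < \<eta>"
      using eta(1) by (auto simp: max_def abs_less_iff split: if_splits)
    have hB: "h s' \<le> B" "h s \<le> B" using B s s' by force+
    have P1: "\<forall>r\<in>{m_h h s s'..h s'}. \<bar>w s' r - w s (h s)\<bar> < \<epsilon>"
    proof
      fix r assume r: "r \<in> {m_h h s s'..h s'}"
      then have "r \<in> {m_h h s s'..max (h s) (h s')}" by auto
      from near[OF this] have a: "\<bar>w s r - w s (h s)\<bar> < \<epsilon>/2" "r \<ge> 0" using eta(2) by auto
      have "\<bar>w s' r - w s r\<bar> < \<epsilon>/2" using d1(2) s' ds r a(2) hB by auto
      then show "\<bar>w s' r - w s (h s)\<bar> < \<epsilon>" using a by linarith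
    qed
    have P2: "\<forall>r\<in>{m_h h s s'..h s}. \<bar>w s r - w s (h s)\<bar> < \<epsilon>"
    proof
      fix r assume r: "r \<in> {m_h h s s'..h s}"
      then have "r \<in> {m_h h s s'..max (h s) (h s')}" by auto
      from near[OF this] have a: "\<bar>w s r - w s (h s)\<bar> < \<epsilon>/2" using eta(2) by auto
      then show "\<bar>w s r - w s (h s)\<bar> < \<epsilon>" using e by linarith
    qed
    show "(\<forall>r\<in>{m_h h s s'..h s'}. \<bar>w s' r - w s (h s)\<bar> < \<epsilon>) \<and>
     (\<forall>r\<in>{m_h h s s'..h s}. \<bar>w s r - w s (h s)\<bar> < \<epsilon>)" using P1 P2 by blast
    qed
  qed
qed

lemma d_small:
  assumes sn: "is_snake \<zeta> h w" and s: "s \<in> {0..\<zeta>}" and e: "\<epsilon> > 0"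
  shows "\<exists>\<delta>>0. \<forall>s'\<in>{0..\<zeta>}. \<bar>s' - s\<bar> < \<delta> \<longrightarrow> d_hw h w s s' < \<epsilon>"
proof -
  obtain \<delta> where d: "\<delta> > 0" "\<forall>s'\<in>{0..\<zeta>}. \<bar>s' - s\<bar> < \<delta> \<longrightarrow>
     (\<forall>r\<in>{m_h h s s'..h s'}. \<bar>w s' r - w s (h s)\<bar> < \<epsilon>/3) \<and>
     (\<forall>r\<in>{m_h h s s'..h s}. \<bar>w s r - w s (h s)\<bar> < \<epsilon>/3)"
    using cont_est[OF sn s, of "\<epsilon>/3"] e by auto
  show ?thesis
  proof (intro exI[of _ \<delta>] conjI ballI impI)
    show "\<delta> > 0" by fact
    fix s' assume s': "s' \<in> {0..\<zeta>}" and ds: "\<bar>s' - s\<bar> < \<delta>"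
    have A: "\<forall>r\<in>{m_h h s s'..h s'}. \<bar>w s' r - w s (h s)\<bar> < \<epsilon>/3"
      and C: "\<forall>r\<in>{m_h h s s'..h s}. \<bar>w s r - w s (h s)\<bar> < \<epsilon>/3" using d(2) s' ds by auto
    have le: "m_h h s s' \<le> h s" "m_h h s s' \<le> h s'" using mh_le[OF sn s s'] by auto
    have 1: "w s (h s) - \<epsilon>/3 \<le> Inf (w s ` {m_h h s s'..h s})"
    proof (rule winf_greatest)
      show "m_h h s s' \<le> h s" by fact
      fix r assume "r \<in> {m_h h s s'..h s}"
      then have "\<bar>w s r - w s (h s)\<bar> < \<epsilon>/3" using C by blast
      then show "w s (h s) - \<epsilon>/3 \<le> w s r" by linarith
    qed
    have 2: "w s (h s) - \<epsilon>/3 \<le> Inf (w s' ` {m_h h s s'..h s'})"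
    proof (rule winf_greatest)
      show "m_h h s s' \<le> h s'" by fact
      fix r assume "r \<in> {m_h h s s'..h s'}"
      then have "\<bar>w s' r - w s (h s)\<bar> < \<epsilon>/3" using A by blast
      then show "w s (h s) - \<epsilon>/3 \<le> w s' r" by linarith
    qed
    have "h s' \<in> {m_h h s s'..h s'}" using le by auto
    then have "\<bar>w s' (h s') - w s (h s)\<bar> < \<epsilon>/3" using A by blast
    then have 3: "w s' (h s') < w s (h s) + \<epsilon>/3" by linarith
    show "d_hw h w s s' < \<epsilon>"
      using 1 2 3 unfolding d_hw_def M_hw_def tip_def by linarith
  qed
qed

theorem lemma4p22:
  fixes \<zeta> :: real and h :: "real \<Rightarrow> real" and w :: "real \<Rightarrow> real \<Rightarrow> real"
  assumes "\<zeta> > 0" and "is_snake \<zeta> h w"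
  shows "(\<forall>s\<in>{0..\<zeta>}. d_hw h w s s = 0)
    \<and> (\<forall>s\<in>{0..\<zeta>}. \<forall>t\<in>{0..\<zeta>}. d_hw h w s t \<ge> 0)
    \<and> (\<forall>s\<in>{0..\<zeta>}. \<forall>t\<in>{0..\<zeta>}. d_hw h w s t = d_hw h w t s)
    \<and> (\<forall>s\<in>{0..\<zeta>}. \<forall>t\<in>{0..\<zeta>}. \<forall>u\<in>{0..\<zeta>}. d_hw h w s u \<le> d_hw h w s t + d_hw h w t u)
    \<and> continuous_on ({0..\<zeta>} \<times> {0..\<zeta>}) (\<lambda>(s, t). d_hw h w s t)
    \<and> (\<forall>s1\<in>{0..\<zeta>}. \<forall>s2\<in>{0..\<zeta>}. \<forall>s3\<in>{0..\<zeta>}. \<forall>s4\<in>{0..\<zeta>}.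
         d_hw h w s1 s2 + d_hw h w s3 s4
           \<le> max (d_hw h w s1 s3 + d_hw h w s2 s4) (d_hw h w s1 s4 + d_hw h w s2 s3))"
proof -
  note sn = assms(2)
  let ?S = "{0..\<zeta>}"
  let ?d = "d_hw h w"
  have d0: "\<forall>s\<in>?S. ?d s s = 0" unfolding d_hw_def M_diag by simp
  have dpos: "\<forall>s\<in>?S. \<forall>t\<in>?S. ?d s t \<ge> 0"
    using M_le_tip[OF sn] unfolding d_hw_def by fastforce
  have dsym: "\<forall>s\<in>?S. \<forall>t\<in>?S. ?d s t = ?d t s"
    unfolding d_hw_def by (simp add: M_sym)
  have tri: "\<forall>s\<in>?S. \<forall>t\<in>?S. \<forall>u\<in>?S. ?d s u \<le> ?d s t + ?d t u"
  proof (intro ballI)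
    fix s t u assume s: "s\<in>?S" and t: "t\<in>?S" and u: "u\<in>?S"
    have "min (M_hw h w s t) (M_hw h w t u) \<le> M_hw h w s u" by (rule M_ultra[OF sn s t u])
    moreover have "M_hw h w s t \<le> tip h w t" "M_hw h w t u \<le> tip h w t"
      using M_le_tip[OF sn s t] M_le_tip[OF sn t u] by auto
    ultimately show "?d s u \<le> ?d s t + ?d t u" unfolding d_hw_def min_le_iff_disj by linarith
  qed
  have fp: "\<forall>s1\<in>?S. \<forall>s2\<in>?S. \<forall>s3\<in>?S. \<forall>s4\<in>?S.
         ?d s1 s2 + ?d s3 s4 \<le> max (?d s1 s3 + ?d s2 s4) (?d s1 s4 + ?d s2 s3)"
  proof (intro ballI)
    fix a b c e assume S: "a\<in>?S" "b\<in>?S" "c\<in>?S" "e\<in>?S"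
    have "min (M_hw h w a c + M_hw h w b e) (M_hw h w a e + M_hw h w b c) \<le> M_hw h w a b + M_hw h w c e"
      by (rule fp_alg[where S="?S"]) (use M_sym M_ultra[OF sn] S in auto)
    then show "?d a b + ?d c e \<le> max (?d a c + ?d b e) (?d a e + ?d b c)"
      unfolding d_hw_def min_le_iff_disj le_max_iff_disj by linarith
  qed
  have cont: "continuous_on (?S \<times> ?S) (\<lambda>(s, t). ?d s t)"
    unfolding continuous_on_iff
  proof (intro ballI allI impI)
    fix x and e :: real assume x: "x \<in> ?S \<times> ?S" and e: "e > 0"
    obtain s t where st: "x = (s,t)" "s\<in>?S" "t\<in>?S" using x by auto
    obtain \<delta>1 where d1: "\<delta>1 > 0" "\<forall>s'\<in>?S. \<bar>s' - s\<bar> < \<delta>1 \<longrightarrow> ?d s s' < e/2"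
      using d_small[OF sn st(2), of "e/2"] e by auto
    obtain \<delta>2 where d2: "\<delta>2 > 0" "\<forall>t'\<in>?S. \<bar>t' - t\<bar> < \<delta>2 \<longrightarrow> ?d t t' < e/2"
      using d_small[OF sn st(3), of "e/2"] e by auto
    show "\<exists>d>0. \<forall>x'\<in>?S \<times> ?S. dist x' x < d \<longrightarrow>
          dist ((\<lambda>(s, t). ?d s t) x') ((\<lambda>(s, t). ?d s t) x) < e"
    proof (intro exI[of _ "min \<delta>1 \<delta>2"] conjI ballI impI)
      show "0 < min \<delta>1 \<delta>2" using d1 d2 by simp
      fix x' assume x': "x' \<in> ?S \<times> ?S" and dx: "dist x' x < min \<delta>1 \<delta>2"
      obtain s' t' where st': "x' = (s',t')" "s'\<in>?S" "t'\<in>?S" using x' by auto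
      have "dist s' s \<le> dist x' x" "dist t' t \<le> dist x' x"
        using dist_fst_le[of x' x] dist_snd_le[of x' x] st st' by auto
      then have "\<bar>s' - s\<bar> < \<delta>1" "\<bar>t' - t\<bar> < \<delta>2" using dx by (auto simp: dist_real_def)
      then have a: "?d s s' < e/2" "?d t t' < e/2" using d1 d2 st' by auto
      have b1: "?d s' t' \<le> ?d s' s + ?d s t'" "?d s t' \<le> ?d s t + ?d t t'"
        using tri st st' by blast+
      have b2: "?d s t \<le> ?d s s' + ?d s' t" "?d s' t \<le> ?d s' t' + ?d t' t"
        using tri st st' by blast+
      have b3: "?d s' s = ?d s s'" "?d t' t = ?d t t'" using dsym st st' by auto
      show "dist ((\<lambda>(s, t). ?d s t) x') ((\<lambda>(s, t). ?d s t) x) < e"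
        unfolding st st' dist_real_def using a b1 b2 b3 by auto
    qed
  qed
  show ?thesis using d0 dpos dsym tri cont fp by blast
qed

end
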